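(* Let $k$ be a field and let $X$ be a $\mathcal{T}$-space. Then $\rho^{-1}\circ\rho_*\simeq\mathrm{id}_{\mathrm{Mod}(k_X)}$. In particular the functor $\rho_*:\mathrm{Mod}(k_X)\to\mathrm{Mod}(k_\mathcal{T})$ is fully faithful.
   Context: Let $X$ be a topological space and $\mathcal{T}$ a family of open subsets of $X$. A $\mathcal{T}$-subset of $X$ is a finite Boolean combination of elements of $\mathcal{T}$; a $\mathcal{T}$-connected subset is a $\mathcal{T}$-subset which is not the disjoint union of two proper $\mathcal{T}$-subsets that are both open and closed in it. $X$ is a $\mathcal{T}$-space if (i) $\mathcal{T}$ is a basis of the topology of $X$ and $\emptyset\in\mathcal{T}$; (ii) $\mathcal{T}$ is closed under finite unions and finite intersections; (iii) every $U\in\mathcal{T}$ has finitely many $\mathcal{T}$-connected components. $X_\mathcal{T}$ is the site whose underlying category is $\mathcal{T}$ (morphisms are inclusions), a family $\{U_i\}\subset\mathcal{T}$ of subsets of $U\in\mathcal{T}$ being a covering of $U$ iff it admits a finite subfamily whose union is $U$. $\mathrm{Mod}(k_\mathcal{T})$ (resp. $\mathrm{Mod}(k_X)$) is the category of sheaves of $k$-vector spaces on $X_\mathcal{T}$ (resp. $X$). $\rho:X\to X_\mathcal{T}$ is the natural morphism of sites, $\rho_*F(U)=F(U)$ for $U\in\mathcal{T}$, and $\rho^{-1}$ is the left adjoint of $\rho_*$. *)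

theory Defs
  imports "HOL-Analysis.Analysis"
begin

inductive_set Tsubsets :: "'x topology \<Rightarrow> 'x set set \<Rightarrow> 'x set set"
  for X :: "'x topology" and T :: "'x set set" where
  basic: "U \<in> T \<Longrightarrow> U \<in> Tsubsets X T"
| compl: "A \<in> Tsubsets X T \<Longrightarrow> topspace X - A \<in> Tsubsets X T"
| union: "A \<in> Tsubsets X T \<Longrightarrow> B \<in> Tsubsets X T \<Longrightarrow> A \<union> B \<in> Tsubsets X T"

definition T_connected :: "'x topology \<Rightarrow> 'x set set \<Rightarrow> 'x set \<Rightarrow> bool" where
  "T_connected X T S \<longleftrightarrow> S \<in> Tsubsets X T \<and>
     \<not> (\<exists>A B. A \<in> Tsubsets X T \<and> B \<in> Tsubsets X T \<and> A \<subset> S \<and> B \<subset> S \<and>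
             A \<inter> B = {} \<and> A \<union> B = S \<and>
             openin (subtopology X S) A \<and> closedin (subtopology X S) A \<and>
             openin (subtopology X S) B \<and> closedin (subtopology X S) B)"

definition T_components :: "'x topology \<Rightarrow> 'x set set \<Rightarrow> 'x set \<Rightarrow> 'x set set" where
  "T_components X T U = {C. C \<subseteq> U \<and> C \<noteq> {} \<and> T_connected X T C \<and>
     (\<forall>D. T_connected X T D \<and> C \<subseteq> D \<and> D \<subseteq> U \<longrightarrow> D = C)}"

definition T_space :: "'x topology \<Rightarrow> 'x set set \<Rightarrow> bool" where
  "T_space X T \<longleftrightarrow>
     (\<forall>U\<in>T. openin X U) \<and>
     (\<forall>U. openin X U \<longrightarrow> (\<forall>x\<in>U. \<exists>V\<in>T. x \<in> V \<and> V \<subseteq> U)) \<and>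
     {} \<in> T \<and>
     (\<forall>U\<in>T. \<forall>V\<in>T. U \<union> V \<in> T \<and> U \<inter> V \<in> T) \<and>
     (\<forall>U\<in>T. finite (T_components X T U))"

text \<open>A (pre)sheaf of k-vector spaces with values in the k-vector space 'a (scalar
  multiplication scl): sections sec U form a subspace, restriction maps res U V.\<close>
type_synonym ('k, 'a, 'x) shdata =
  "('k \<Rightarrow> 'a \<Rightarrow> 'a) \<times> ('x set \<Rightarrow> 'a set) \<times> ('x set \<Rightarrow> 'x set \<Rightarrow> 'a \<Rightarrow> 'a)"

definition scl :: "('k, 'a, 'x) shdata \<Rightarrow> 'k \<Rightarrow> 'a \<Rightarrow> 'a" where "scl F = fst F"
definition sec :: "('k, 'a, 'x) shdata \<Rightarrow> 'x set \<Rightarrow> 'a set" where "sec F = fst (snd F)"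
definition res :: "('k, 'a, 'x) shdata \<Rightarrow> 'x set \<Rightarrow> 'x set \<Rightarrow> 'a \<Rightarrow> 'a" where "res F = snd (snd F)"

definition lin_on :: "('k \<Rightarrow> 'a::ab_group_add \<Rightarrow> 'a) \<Rightarrow> ('k \<Rightarrow> 'b::ab_group_add \<Rightarrow> 'b)
    \<Rightarrow> 'a set \<Rightarrow> ('a \<Rightarrow> 'b) \<Rightarrow> bool" where
  "lin_on s1 s2 S f \<longleftrightarrow> (\<forall>x\<in>S. \<forall>y\<in>S. f (x + y) = f x + f y) \<and> (\<forall>c. \<forall>x\<in>S. f (s1 c x) = s2 c (f x))"

text \<open>Presheaf on the poset of "opens" Os (opens of X, or the family T).\<close>
definition presheaf_on :: "'x set set \<Rightarrow> ('k::field, 'a::ab_group_add, 'x) shdata \<Rightarrow> bool" where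
  "presheaf_on Os F \<longleftrightarrow> vector_space (scl F) \<and>
     (\<forall>U\<in>Os. module.subspace (scl F) (sec F U)) \<and>
     (\<forall>U\<in>Os. \<forall>V\<in>Os. V \<subseteq> U \<longrightarrow> lin_on (scl F) (scl F) (sec F U) (res F U V) \<and> res F U V ` sec F U \<subseteq> sec F V) \<and>
     (\<forall>U\<in>Os. \<forall>x\<in>sec F U. res F U U x = x) \<and>
     (\<forall>U\<in>Os. \<forall>V\<in>Os. \<forall>W\<in>Os. W \<subseteq> V \<longrightarrow> V \<subseteq> U \<longrightarrow> (\<forall>x\<in>sec F U. res F V W (res F U V x) = res F U W x))"

definition sheaf_cond :: "'x set set \<Rightarrow> ('x set \<Rightarrow> 'x set set \<Rightarrow> bool) \<Rightarrow> ('k, 'a, 'x) shdata \<Rightarrow> bool" where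
  "sheaf_cond Os cov F \<longleftrightarrow> (\<forall>U\<in>Os. \<forall>\<U>. cov U \<U> \<longrightarrow>
     (\<forall>x\<in>sec F U. \<forall>y\<in>sec F U. (\<forall>V\<in>\<U>. res F U V x = res F U V y) \<longrightarrow> x = y) \<and>
     (\<forall>f. (\<forall>V\<in>\<U>. f V \<in> sec F V) \<and>
          (\<forall>V\<in>\<U>. \<forall>W\<in>\<U>. res F V (V \<inter> W) (f V) = res F W (V \<inter> W) (f W))
          \<longrightarrow> (\<exists>x\<in>sec F U. \<forall>V\<in>\<U>. res F U V x = f V)))"

text \<open>Coverings on X (usual) and on the site X_T (finite subcovering required).\<close>
definition cov_X :: "'x topology \<Rightarrow> 'x set \<Rightarrow> 'x set set \<Rightarrow> bool" where
  "cov_X X U \<U> \<longleftrightarrow> (\<forall>V\<in>\<U>. openin X V) \<and> \<Union>\<U> = U"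

definition cov_T :: "'x set set \<Rightarrow> 'x set \<Rightarrow> 'x set set \<Rightarrow> bool" where
  "cov_T T U \<U> \<longleftrightarrow> \<U> \<subseteq> T \<and> (\<forall>V\<in>\<U>. V \<subseteq> U) \<and> (\<exists>\<V>\<subseteq>\<U>. finite \<V> \<and> \<Union>\<V> = U)"

definition opens :: "'x topology \<Rightarrow> 'x set set" where
  "opens X = {U. openin X U}"

definition sheaf_X :: "'x topology \<Rightarrow> ('k::field, 'a::ab_group_add, 'x) shdata \<Rightarrow> bool" where
  "sheaf_X X F \<longleftrightarrow> presheaf_on (opens X) F \<and> sheaf_cond (opens X) (cov_X X) F"

definition sheaf_T :: "'x set set \<Rightarrow> ('k::field, 'a::ab_group_add, 'x) shdata \<Rightarrow> bool" where
  "sheaf_T T F \<longleftrightarrow> presheaf_on T F \<and> sheaf_cond T (cov_T T) F"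

text \<open>Morphisms of (pre)sheaves over Os (two morphisms are equal iff they agree on sections).\<close>
definition shmor :: "'x set set \<Rightarrow> ('k, 'a::ab_group_add, 'x) shdata \<Rightarrow> ('k, 'b::ab_group_add, 'x) shdata
    \<Rightarrow> ('x set \<Rightarrow> 'a \<Rightarrow> 'b) \<Rightarrow> bool" where
  "shmor Os F G \<phi> \<longleftrightarrow>
     (\<forall>U\<in>Os. lin_on (scl F) (scl G) (sec F U) (\<phi> U) \<and> \<phi> U ` sec F U \<subseteq> sec G U) \<and>
     (\<forall>U\<in>Os. \<forall>V\<in>Os. V \<subseteq> U \<longrightarrow> (\<forall>x\<in>sec F U. \<phi> V (res F U V x) = res G U V (\<phi> U x)))"

definition mor_eq :: "'x set set \<Rightarrow> ('k, 'a, 'x) shdata \<Rightarrow> ('x set \<Rightarrow> 'a \<Rightarrow> 'b) \<Rightarrow> ('x set \<Rightarrow> 'a \<Rightarrow> 'b) \<Rightarrow> bool" where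
  "mor_eq Os F \<phi> \<psi> \<longleftrightarrow> (\<forall>U\<in>Os. \<forall>x\<in>sec F U. \<phi> U x = \<psi> U x)"

text \<open>The direct image rho_* : Mod(k_X) \<rightarrow> Mod(k_T): (rho_* F)(U) = F(U) for U in T.
  On morphisms, rho_* \<psi> is \<psi> restricted to U in T.\<close>
definition rho_push :: "('k, 'a, 'x) shdata \<Rightarrow> ('k, 'a, 'x) shdata" where
  "rho_push F = F"

definition mcomp :: "('x set \<Rightarrow> 'b \<Rightarrow> 'c) \<Rightarrow> ('x set \<Rightarrow> 'a \<Rightarrow> 'b) \<Rightarrow> ('x set \<Rightarrow> 'a \<Rightarrow> 'c)" where
  "mcomp \<psi> \<phi> = (\<lambda>U x. \<psi> U (\<phi> U x))"

text \<open>(G, \<eta>) is a value of a left adjoint rho^{-1} at the T-sheaf H, tested against the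
  sheaves F on X (universal arrow from H to rho_*): for every sheaf F on X and every
  morphism f : H \<rightarrow> rho_* F there is a unique g : G \<rightarrow> F with rho_* g \<circ> \<eta> = f.\<close>
definition universal_against ::
  "'x topology \<Rightarrow> 'x set set \<Rightarrow> ('k::field, 'h::ab_group_add, 'x) shdata \<Rightarrow> ('k, 'c::ab_group_add, 'x) shdata
    \<Rightarrow> ('x set \<Rightarrow> 'h \<Rightarrow> 'c) \<Rightarrow> ('k, 'a::ab_group_add, 'x) shdata \<Rightarrow> bool" where
  "universal_against X T H G \<eta> F \<longleftrightarrow>
     (\<forall>f. shmor T H (rho_push F) f \<longrightarrow>
        (\<exists>g. shmor (opens X) G F g \<and> mor_eq T H (mcomp g \<eta>) f) \<and>
        (\<forall>g g'. shmor (opens X) G F g \<and> shmor (opens X) G F g' \<and>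
                mor_eq T H (mcomp g \<eta>) f \<and> mor_eq T H (mcomp g' \<eta>) f \<longrightarrow> mor_eq (opens X) G g g'))"

definition sh_iso :: "'x topology \<Rightarrow> ('k, 'a::ab_group_add, 'x) shdata \<Rightarrow> ('k, 'b::ab_group_add, 'x) shdata
    \<Rightarrow> ('x set \<Rightarrow> 'a \<Rightarrow> 'b) \<Rightarrow> bool" where
  "sh_iso X F G \<phi> \<longleftrightarrow> shmor (opens X) F G \<phi> \<and>
     (\<exists>\<psi>. shmor (opens X) G F \<psi> \<and> mor_eq (opens X) F (mcomp \<psi> \<phi>) (\<lambda>U x. x)
          \<and> mor_eq (opens X) G (mcomp \<phi> \<psi>) (\<lambda>U x. x))"

end

theory Submission
  imports Defs
begin

lemma shmor_comp:
  assumes "shmor Os F G \<phi>" "shmor Os G H \<psi>"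
  shows "shmor Os F H (mcomp \<psi> \<phi>)"
  using assms unfolding shmor_def mcomp_def lin_on_def
  by (simp add: image_subset_iff)

lemma shmor_id: "shmor Os F F (\<lambda>U x. x)"
  unfolding shmor_def lin_on_def by simp

lemma subsp:
  assumes "vector_space s" "module.subspace s S"
  shows "0 \<in> S" "x \<in> S \<Longrightarrow> y \<in> S \<Longrightarrow> x + y \<in> S" "x \<in> S \<Longrightarrow> s c x \<in> S"
proof -
  have m: "module s" using assms(1) by (simp add: vector_space_def module_def)
  show "0 \<in> S" "x \<in> S \<Longrightarrow> y \<in> S \<Longrightarrow> x + y \<in> S" "x \<in> S \<Longrightarrow> s c x \<in> S"
  using assms(2) module.subspace_def[OF m, of S] by auto
qed

lemma Tsp:
  assumes "T_space X T"
  shows "V \<in> T \<Longrightarrow> openin X V" "openin X U \<Longrightarrow> x \<in> U \<Longrightarrow> \<exists>V\<in>T. x \<in> V \<and> V \<subseteq> U"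
    "U \<in> T \<Longrightarrow> V \<in> T \<Longrightarrow> U \<inter> V \<in> T"
  using assms unfolding T_space_def by blast+

lemma cover_T:
  assumes "T_space X T" "openin X U"
  shows "cov_X X U {V\<in>T. V \<subseteq> U}"
  unfolding cov_X_def using Tsp[OF assms(1)] assms(2) by blast


lemma shmor_in: "shmor Os F G \<phi> \<Longrightarrow> U \<in> Os \<Longrightarrow> x \<in> sec F U \<Longrightarrow> \<phi> U x \<in> sec G U"
  unfolding shmor_def by blast

lemma shmor_nat: "shmor Os F G \<phi> \<Longrightarrow> U \<in> Os \<Longrightarrow> V \<in> Os \<Longrightarrow> V \<subseteq> U \<Longrightarrow> x \<in> sec F U
   \<Longrightarrow> \<phi> V (res F U V x) = res G U V (\<phi> U x)"
  unfolding shmor_def by blast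

lemma shmor_lin: "shmor Os F G \<phi> \<Longrightarrow> U \<in> Os \<Longrightarrow> lin_on (scl F) (scl G) (sec F U) (\<phi> U)"
  unfolding shmor_def by blast

lemma sheaf_sep: "sheaf_X X G \<Longrightarrow> openin X U \<Longrightarrow> cov_X X U C \<Longrightarrow> a \<in> sec G U \<Longrightarrow> b \<in> sec G U
   \<Longrightarrow> (\<And>V. V \<in> C \<Longrightarrow> res G U V a = res G U V b) \<Longrightarrow> a = b"
  unfolding sheaf_X_def sheaf_cond_def opens_def by blast

lemma sheaf_glue: "sheaf_X X G \<Longrightarrow> openin X U \<Longrightarrow> cov_X X U C \<Longrightarrow> (\<And>V. V \<in> C \<Longrightarrow> f V \<in> sec G V)
   \<Longrightarrow> (\<And>V W. V \<in> C \<Longrightarrow> W \<in> C \<Longrightarrow> res G V (V \<inter> W) (f V) = res G W (V \<inter> W) (f W))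
   \<Longrightarrow> \<exists>x\<in>sec G U. \<forall>V\<in>C. res G U V x = f V"
  unfolding sheaf_X_def sheaf_cond_def opens_def
  apply (elim conjE)
  apply (drule bspec[where x=U], simp)
  apply (drule spec[where x=C])
  by blast

lemma pres_parts:
  assumes "presheaf_on Os F"
  shows "vector_space (scl F)"
    "U \<in> Os \<Longrightarrow> module.subspace (scl F) (sec F U)"
    "U \<in> Os \<Longrightarrow> V \<in> Os \<Longrightarrow> V \<subseteq> U \<Longrightarrow> lin_on (scl F) (scl F) (sec F U) (res F U V)"
    "U \<in> Os \<Longrightarrow> V \<in> Os \<Longrightarrow> V \<subseteq> U \<Longrightarrow> x \<in> sec F U \<Longrightarrow> res F U V x \<in> sec F V"
    "U \<in> Os \<Longrightarrow> V \<in> Os \<Longrightarrow> W \<in> Os \<Longrightarrow> W \<subseteq> V \<Longrightarrow> V \<subseteq> U \<Longrightarrow> x \<in> sec F U \<Longrightarrow> res F V W (res F U V x) = res F U W x"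
proof -
  note A = assms[unfolded presheaf_on_def]
  show "vector_space (scl F)" using A by (elim conjE)
  show "U \<in> Os \<Longrightarrow> module.subspace (scl F) (sec F U)" using A by (elim conjE) simp
  show "U \<in> Os \<Longrightarrow> V \<in> Os \<Longrightarrow> V \<subseteq> U \<Longrightarrow> lin_on (scl F) (scl F) (sec F U) (res F U V)"
    using A by (elim conjE) simp
  show "U \<in> Os \<Longrightarrow> V \<in> Os \<Longrightarrow> V \<subseteq> U \<Longrightarrow> x \<in> sec F U \<Longrightarrow> res F U V x \<in> sec F V"
    using A by (elim conjE) (simp add: image_subset_iff)
  show "U \<in> Os \<Longrightarrow> V \<in> Os \<Longrightarrow> W \<in> Os \<Longrightarrow> W \<subseteq> V \<Longrightarrow> V \<subseteq> U \<Longrightarrow> x \<in> sec F U \<Longrightarrow> res F V W (res F U V x) = res F U W x"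
    using A by (elim conjE) simp
qed

lemma faithful:
  assumes TS: "T_space X T" and F: "sheaf_X X F" and G: "sheaf_X X G"
    and m1: "shmor (opens X) F G \<psi>" and m2: "shmor (opens X) F G \<psi>'"
    and eq: "mor_eq T F \<psi> \<psi>'"
  shows "mor_eq (opens X) F \<psi> \<psi>'"
  unfolding mor_eq_def
proof (intro ballI)
  fix U x assume U: "U \<in> opens X" and x: "x \<in> sec F U"
  have oU: "openin X U" using U by (simp add: opens_def)
  have Fp: "presheaf_on (opens X) F" using F unfolding sheaf_X_def by simp
  have cov: "cov_X X U {V\<in>T. V \<subseteq> U}" using cover_T[OF TS oU] .
  have in1: "\<psi> U x \<in> sec G U" using shmor_in[OF m1 U x] .
  have in2: "\<psi>' U x \<in> sec G U" using shmor_in[OF m2 U x] .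
  have "res G U V (\<psi> U x) = res G U V (\<psi>' U x)" if V: "V \<in> T" "V \<subseteq> U" for V
  proof -
    have Vo: "V \<in> opens X" using Tsp(1)[OF TS V(1)] by (simp add: opens_def)
    have rx: "res F U V x \<in> sec F V" using pres_parts(4)[OF Fp U Vo V(2) x] .
    have "res G U V (\<psi> U x) = \<psi> V (res F U V x)" using shmor_nat[OF m1 U Vo V(2) x] by simp
    also have "\<dots> = \<psi>' V (res F U V x)" using eq V(1) rx unfolding mor_eq_def by simp
    also have "\<dots> = res G U V (\<psi>' U x)" using shmor_nat[OF m2 U Vo V(2) x] by simp
    finally show ?thesis .
  qed
  then show "\<psi> U x = \<psi>' U x" by (intro sheaf_sep[OF G oU cov in1 in2]) simp
qed

lemma extend:
  assumes TS: "T_space X T" and F: "sheaf_X X F" and G: "sheaf_X X G"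
    and phi: "shmor T F G \<phi>"
  shows "\<exists>\<psi>. shmor (opens X) F G \<psi> \<and> mor_eq T F \<psi> \<phi>"
proof -
  let ?C = "\<lambda>U. {V\<in>T. V \<subseteq> U}"
  let ?P = "\<lambda>U x y. y \<in> sec G U \<and> (\<forall>V\<in>?C U. res G U V y = \<phi> V (res F U V x))"
  define \<psi> where "\<psi> U x = (SOME y. ?P U x y)" for U x
  have Fp: "presheaf_on (opens X) F" and Gp: "presheaf_on (opens X) G"
    using F G unfolding sheaf_X_def by auto
  have TO: "V \<in> T \<Longrightarrow> V \<in> opens X" for V using Tsp(1)[OF TS] by (simp add: opens_def)
  have vsF: "vector_space (scl F)" using pres_parts(1)[OF Fp] .
  have vsG: "vector_space (scl G)" using pres_parts(1)[OF Gp] .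
  have resF: "res F U V x \<in> sec F V" if "U \<in> opens X" "V \<in> opens X" "V \<subseteq> U" "x \<in> sec F U" for U V x
    using pres_parts(4)[OF Fp] that by blast
  have resG: "res G U V x \<in> sec G V" if "U \<in> opens X" "V \<in> opens X" "V \<subseteq> U" "x \<in> sec G U" for U V x
    using pres_parts(4)[OF Gp] that by blast
  have compF: "res F V W (res F U V x) = res F U W x" if "U \<in> opens X" "V \<in> opens X" "W \<in> opens X" "W \<subseteq> V" "V \<subseteq> U" "x \<in> sec F U" for U V W x
    using pres_parts(5)[OF Fp] that by blast
  have compG: "res G V W (res G U V x) = res G U W x" if "U \<in> opens X" "V \<in> opens X" "W \<in> opens X" "W \<subseteq> V" "V \<subseteq> U" "x \<in> sec G U" for U V W x
    using pres_parts(5)[OF Gp] that by blast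
  have linG: "lin_on (scl G) (scl G) (sec G U) (res G U V)" if "U \<in> opens X" "V \<in> opens X" "V \<subseteq> U" for U V
    using pres_parts(3)[OF Gp] that by blast
  have linF: "lin_on (scl F) (scl F) (sec F U) (res F U V)" if "U \<in> opens X" "V \<in> opens X" "V \<subseteq> U" for U V
    using pres_parts(3)[OF Fp] that by blast
  have subF: "module.subspace (scl F) (sec F U)" if "U \<in> opens X" for U
    using pres_parts(2)[OF Fp] that by blast
  have subG: "module.subspace (scl G) (sec G U)" if "U \<in> opens X" for U
    using pres_parts(2)[OF Gp] that by blast
  have phin: "\<phi> U x \<in> sec G U" if "U \<in> T" "x \<in> sec F U" for U x
    using shmor_in[OF phi] that by blast
  have phinat: "\<phi> V (res F U V x) = res G U V (\<phi> U x)" if "U \<in> T" "V \<in> T" "V \<subseteq> U" "x \<in> sec F U" for U V x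
    using shmor_nat[OF phi] that by blast
  have philin: "lin_on (scl F) (scl G) (sec F U) (\<phi> U)" if "U \<in> T" for U
    using shmor_lin[OF phi] that by blast
  have sepG: "a = b" if "U \<in> opens X" "a \<in> sec G U" "b \<in> sec G U" "\<forall>V\<in>?C U. res G U V a = res G U V b" for U a b
  proof -
    have "cov_X X U (?C U)" using cover_T[OF TS] that(1) by (simp add: opens_def)
    moreover have "openin X U" using that(1) by (simp add: opens_def)
    ultimately show ?thesis using sheaf_sep[OF G _ _ that(2,3), of "?C U"] that(4) by blast
  qed
  have ex: "\<exists>y. ?P U x y" if U: "U \<in> opens X" and x: "x \<in> sec F U" for U x
  proof -
    have cov: "cov_X X U (?C U)" using cover_T[OF TS] U by (simp add: opens_def)
    define f where "f V = \<phi> V (res F U V x)" for V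
    have "\<forall>V\<in>?C U. f V \<in> sec G V"
      unfolding f_def using phin resF TO U x by blast
    moreover have "res G V (V \<inter> W) (f V) = res G W (V \<inter> W) (f W)" if V: "V \<in> ?C U" and W: "W \<in> ?C U" for V W
    proof -
      have VW: "V \<inter> W \<in> T" using Tsp(3)[OF TS] V W by blast
      have "res G V (V \<inter> W) (f V) = \<phi> (V \<inter> W) (res F V (V \<inter> W) (res F U V x))"
        unfolding f_def using phinat[of V "V \<inter> W"] V VW resF TO U x by auto
      also have "\<dots> = \<phi> (V \<inter> W) (res F U (V \<inter> W) x)" using compF[of U V "V \<inter> W" x] V VW TO U x by auto
      also have "\<dots> = \<phi> (V \<inter> W) (res F W (V \<inter> W) (res F U W x))" using compF[of U W "V \<inter> W" x] W VW TO U x by auto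
      also have "\<dots> = res G W (V \<inter> W) (f W)"
        unfolding f_def using phinat[of W "V \<inter> W"] W VW resF TO U x by auto
      finally show ?thesis .
    qed
    ultimately obtain y where "y \<in> sec G U" "\<forall>V\<in>?C U. res G U V y = f V"
      using sheaf_glue[OF G _ cov, of f] U by (auto simp: opens_def)
    then show ?thesis unfolding f_def by blast
  qed
  have psiP: "?P U x (\<psi> U x)" if "U \<in> opens X" "x \<in> sec F U" for U x
    unfolding \<psi>_def using someI_ex[OF ex[OF that]] .
  have uniq: "y = \<psi> U x" if U: "U \<in> opens X" and x: "x \<in> sec F U" and y: "?P U x y" for U x y
    using sepG[OF U] psiP[OF U x] y by auto
  have sh: "shmor (opens X) F G \<psi>"
    unfolding shmor_def
  proof (intro conjI ballI impI)
    fix U assume U: "U \<in> opens X"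
    show "\<psi> U ` sec F U \<subseteq> sec G U" using psiP[OF U] by blast
    show "lin_on (scl F) (scl G) (sec F U) (\<psi> U)"
      unfolding lin_on_def
    proof (intro conjI ballI allI)
      fix a b assume a: "a \<in> sec F U" and b: "b \<in> sec F U"
      have ab: "a + b \<in> sec F U" using subsp(2)[OF vsF subF[OF U] a b] .
      have "\<psi> U a + \<psi> U b \<in> sec G U" using subsp(2)[OF vsG subG[OF U]] psiP[OF U a] psiP[OF U b] by blast
      moreover have "res G U V (\<psi> U a + \<psi> U b) = \<phi> V (res F U V (a + b))" if V: "V \<in> ?C U" for V
      proof -
        have Vo: "V \<in> opens X" using TO V by blast
        have "res G U V (\<psi> U a + \<psi> U b) = res G U V (\<psi> U a) + res G U V (\<psi> U b)"
          using linG[OF U Vo] V psiP[OF U a] psiP[OF U b] unfolding lin_on_def by blast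
        also have "\<dots> = \<phi> V (res F U V a) + \<phi> V (res F U V b)" using psiP[OF U a] psiP[OF U b] V by auto
        also have "\<dots> = \<phi> V (res F U V a + res F U V b)"
          using philin[of V] V resF[OF U Vo _ a] resF[OF U Vo _ b] unfolding lin_on_def by auto
        also have "\<dots> = \<phi> V (res F U V (a + b))"
          using linF[OF U Vo] V a b unfolding lin_on_def by auto
        finally show ?thesis .
      qed
      ultimately show "\<psi> U (a + b) = \<psi> U a + \<psi> U b" by (intro sym[OF uniq[OF U ab]]) blast
    next
      fix c a assume a: "a \<in> sec F U"
      have ca: "scl F c a \<in> sec F U" using subsp(3)[OF vsF subF[OF U] a] .
      have "scl G c (\<psi> U a) \<in> sec G U" using subsp(3)[OF vsG subG[OF U]] psiP[OF U a] by blast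
      moreover have "res G U V (scl G c (\<psi> U a)) = \<phi> V (res F U V (scl F c a))" if V: "V \<in> ?C U" for V
      proof -
        have Vo: "V \<in> opens X" using TO V by blast
        have "res G U V (scl G c (\<psi> U a)) = scl G c (res G U V (\<psi> U a))"
          using linG[OF U Vo] V psiP[OF U a] unfolding lin_on_def by blast
        also have "\<dots> = scl G c (\<phi> V (res F U V a))" using psiP[OF U a] V by auto
        also have "\<dots> = \<phi> V (scl F c (res F U V a))"
          using philin[of V] V resF[OF U Vo _ a] unfolding lin_on_def by auto
        also have "\<dots> = \<phi> V (res F U V (scl F c a))"
          using linF[OF U Vo] V a unfolding lin_on_def by auto
        finally show ?thesis .
      qed
      ultimately show "\<psi> U (scl F c a) = scl G c (\<psi> U a)" by (intro sym[OF uniq[OF U ca]]) blast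
    qed
  next
    fix U V x assume U: "U \<in> opens X" and V: "V \<in> opens X" and VU: "V \<subseteq> U" and x: "x \<in> sec F U"
    have rx: "res F U V x \<in> sec F V" using resF[OF U V VU x] .
    have "res G U V (\<psi> U x) \<in> sec G V" using resG[OF U V VU] psiP[OF U x] by blast
    moreover have "res G V W (res G U V (\<psi> U x)) = \<phi> W (res F V W (res F U V x))" if W: "W \<in> ?C V" for W
    proof -
      have Wo: "W \<in> opens X" using TO W by blast
      have "res G V W (res G U V (\<psi> U x)) = res G U W (\<psi> U x)"
        using compG[OF U V Wo _ VU] W psiP[OF U x] by blast
      also have "\<dots> = \<phi> W (res F U W x)" using psiP[OF U x] W VU by auto
      also have "\<dots> = \<phi> W (res F V W (res F U V x))" using compF[OF U V Wo _ VU x] W by auto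
      finally show ?thesis .
    qed
    ultimately show "\<psi> V (res F U V x) = res G U V (\<psi> U x)" by (intro sym[OF uniq[OF V rx]]) blast
  qed
  have "mor_eq T F \<psi> \<phi>"
    unfolding mor_eq_def
  proof (intro ballI)
    fix U x assume U: "U \<in> T" and x: "x \<in> sec F U"
    have "?P U x (\<phi> U x)" using phin[OF U x] phinat[OF U _ _ x] by auto
    then show "\<psi> U x = \<phi> U x" using uniq[OF TO[OF U] x] by simp
  qed
  with sh show ?thesis by blast
qed

theorem mainTheorem11:
  fixes X :: "'x topology" and T :: "'x set set"
  assumes "T_space X T"
  shows
    \<comment> \<open>rho^{-1} \<circ> rho_* \<simeq> id: for every F in Mod(k_X) and every value (G, \<eta>) of rho^{-1}
        at rho_* F, the counit \<epsilon> : rho^{-1} rho_* F = G \<rightarrow> F is an isomorphism\<close>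
    "(\<forall>(F :: ('k::field, 'a::ab_group_add, 'x) shdata) (G :: ('k, 'c::ab_group_add, 'x) shdata) \<eta>.
        sheaf_X X F \<and> sheaf_X X G \<and> shmor T (rho_push F) (rho_push G) \<eta> \<and>
        (\<forall>F' :: ('k, 'a, 'x) shdata. sheaf_X X F' \<longrightarrow> universal_against X T (rho_push F) G \<eta> F') \<and>
        (\<forall>G' :: ('k, 'c, 'x) shdata. sheaf_X X G' \<longrightarrow> universal_against X T (rho_push F) G \<eta> G')
      \<longrightarrow> (\<exists>\<epsilon>. shmor (opens X) G F \<epsilon> \<and> mor_eq T (rho_push F) (mcomp \<epsilon> \<eta>) (\<lambda>U x. x)
               \<and> sh_iso X G F \<epsilon>))
     \<and>
     \<comment> \<open>rho_* is fully faithful\<close>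
     (\<forall>(F :: ('k, 'a, 'x) shdata) (G :: ('k, 'b::ab_group_add, 'x) shdata).
        sheaf_X X F \<and> sheaf_X X G \<longrightarrow>
        (\<forall>\<phi>. shmor T (rho_push F) (rho_push G) \<phi> \<longrightarrow>
           (\<exists>\<psi>. shmor (opens X) F G \<psi> \<and> mor_eq T F \<psi> \<phi>)) \<and>
        (\<forall>\<psi> \<psi>'. shmor (opens X) F G \<psi> \<and> shmor (opens X) F G \<psi>' \<and> mor_eq T F \<psi> \<psi>'
           \<longrightarrow> mor_eq (opens X) F \<psi> \<psi>'))"
proof (rule conjI)
  have TO: "V \<in> T \<Longrightarrow> V \<in> opens X" for V using Tsp(1)[OF assms] by (simp add: opens_def)
  show "(\<forall>(F :: ('k::field, 'a::ab_group_add, 'x) shdata) (G :: ('k, 'c::ab_group_add, 'x) shdata) \<eta>.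
        sheaf_X X F \<and> sheaf_X X G \<and> shmor T (rho_push F) (rho_push G) \<eta> \<and>
        (\<forall>F' :: ('k, 'a, 'x) shdata. sheaf_X X F' \<longrightarrow> universal_against X T (rho_push F) G \<eta> F') \<and>
        (\<forall>G' :: ('k, 'c, 'x) shdata. sheaf_X X G' \<longrightarrow> universal_against X T (rho_push F) G \<eta> G')
      \<longrightarrow> (\<exists>\<epsilon>. shmor (opens X) G F \<epsilon> \<and> mor_eq T (rho_push F) (mcomp \<epsilon> \<eta>) (\<lambda>U x. x)
               \<and> sh_iso X G F \<epsilon>))"
  proof (intro allI impI)
  fix F :: "('k::field, 'a::ab_group_add, 'x) shdata" and G :: "('k, 'c::ab_group_add, 'x) shdata" and \<eta>
  assume H: "sheaf_X X F \<and> sheaf_X X G \<and> shmor T (rho_push F) (rho_push G) \<eta> \<and>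
        (\<forall>F' :: ('k, 'a, 'x) shdata. sheaf_X X F' \<longrightarrow> universal_against X T (rho_push F) G \<eta> F') \<and>
        (\<forall>G' :: ('k, 'c, 'x) shdata. sheaf_X X G' \<longrightarrow> universal_against X T (rho_push F) G \<eta> G')"
  then have F: "sheaf_X X F" and G: "sheaf_X X G" and eta: "shmor T F G \<eta>"
    and uF: "universal_against X T F G \<eta> F" and uG: "universal_against X T F G \<eta> G"
    by (simp_all add: rho_push_def del: split_paired_All)
  obtain \<epsilon> where e1: "shmor (opens X) G F \<epsilon>" and e2: "mor_eq T F (mcomp \<epsilon> \<eta>) (\<lambda>U x. x)"
    using uF shmor_id[of T F] unfolding universal_against_def rho_push_def by blast
  obtain \<psi> where p1: "shmor (opens X) F G \<psi>" and p2: "mor_eq T F \<psi> \<eta>"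
    using extend[OF assms F G eta] by blast
  have etain: "\<eta> U x \<in> sec G U" if "U \<in> T" "x \<in> sec F U" for U x
    using eta that unfolding shmor_def by blast
  have c1: "mor_eq (opens X) F (mcomp \<epsilon> \<psi>) (\<lambda>U x. x)"
  proof (rule faithful[OF assms F F shmor_comp[OF p1 e1] shmor_id])
    show "mor_eq T F (mcomp \<epsilon> \<psi>) (\<lambda>U x. x)"
      using e2 p2 unfolding mor_eq_def mcomp_def by simp
  qed
  have c2: "mor_eq (opens X) G (mcomp \<psi> \<epsilon>) (\<lambda>U x. x)"
  proof -
    have A: "mor_eq T F (mcomp (mcomp \<psi> \<epsilon>) \<eta>) \<eta>"
      unfolding mor_eq_def mcomp_def
    proof (intro ballI)
      fix U x assume U: "U \<in> T" and x: "x \<in> sec F U"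
      have "\<epsilon> U (\<eta> U x) = x" using e2 U x unfolding mor_eq_def mcomp_def by simp
      then show "\<psi> U (\<epsilon> U (\<eta> U x)) = \<eta> U x" using p2 U x unfolding mor_eq_def by simp
    qed
    have B: "mor_eq T F (mcomp (\<lambda>U x. x) \<eta>) \<eta>" unfolding mor_eq_def mcomp_def by simp
    show ?thesis using uG eta shmor_comp[OF e1 p1] shmor_id[of "opens X" G] A B
      unfolding universal_against_def rho_push_def by blast
  qed
  show "\<exists>\<epsilon>. shmor (opens X) G F \<epsilon> \<and> mor_eq T (rho_push F) (mcomp \<epsilon> \<eta>) (\<lambda>U x. x) \<and> sh_iso X G F \<epsilon>"
    using e1 e2 p1 c1 c2 unfolding sh_iso_def rho_push_def by blast
  qed
next
  show "(\<forall>(F :: ('k, 'a, 'x) shdata) (G :: ('k, 'b::ab_group_add, 'x) shdata).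
        sheaf_X X F \<and> sheaf_X X G \<longrightarrow>
        (\<forall>\<phi>. shmor T (rho_push F) (rho_push G) \<phi> \<longrightarrow>
           (\<exists>\<psi>. shmor (opens X) F G \<psi> \<and> mor_eq T F \<psi> \<phi>)) \<and>
        (\<forall>\<psi> \<psi>'. shmor (opens X) F G \<psi> \<and> shmor (opens X) F G \<psi>' \<and> mor_eq T F \<psi> \<psi>'
           \<longrightarrow> mor_eq (opens X) F \<psi> \<psi>'))"
  proof (intro allI impI conjI)
    fix F :: "('k, 'a, 'x) shdata" and G :: "('k, 'b::ab_group_add, 'x) shdata" and \<phi>
    assume FG: "sheaf_X X F \<and> sheaf_X X G" and "shmor T (rho_push F) (rho_push G) \<phi>"
    then show "\<exists>\<psi>. shmor (opens X) F G \<psi> \<and> mor_eq T F \<psi> \<phi>"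
      using extend[OF assms] unfolding rho_push_def by blast
  next
    fix F :: "('k, 'a, 'x) shdata" and G :: "('k, 'b::ab_group_add, 'x) shdata" and \<psi> \<psi>'
    assume FG: "sheaf_X X F \<and> sheaf_X X G" and "shmor (opens X) F G \<psi> \<and> shmor (opens X) F G \<psi>' \<and> mor_eq T F \<psi> \<psi>'"
    then show "mor_eq (opens X) F \<psi> \<psi>'" using faithful[OF assms] by blast
  qed
qed

end
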